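(* Let $R$ be a Bézout domain and let $A,B,C\in R^{n\times n}$ satisfy $ABA=ACA$. If $R_r(A)=R_r(ABA)$, then $AB$ is similar to $CA$.
   Context: A Bézout domain is an integral domain in which every finitely generated ideal is principal. For $M\in R^{m\times n}$, $R_r(M)=\{Mx : x\in R^{n\times 1}\}\subseteq R^{m\times 1}$ is the column space of $M$. Two matrices $M,N\in R^{n\times n}$ are similar if $M=S^{-1}NS$ for some invertible $S\in R^{n\times n}$. *)

theory Defs
  imports "Jordan_Normal_Form.Matrix"
begin

text \<open>A Bezout domain: an integral domain (type class idom) in which every finitely
generated ideal is principal. The ideal generated by a finite set S is the set of
all R-linear combinations of elements of S.\<close>
definition bezout_domain :: "'a::idom itself \<Rightarrow> bool" where
  "bezout_domain _ \<longleftrightarrow>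
     (\<forall>S::'a set. finite S \<longrightarrow>
        (\<exists>d::'a. {(\<Sum>s\<in>S. r s * s) | r. True} = {d * z | z. True}))"

text \<open>Column space R_r(M) = { M x : x in R^(n x 1) } for an m x n matrix M.\<close>
definition col_space :: "'a::semiring_0 mat \<Rightarrow> 'a vec set" where
  "col_space M = {M *\<^sub>v x | x. x \<in> carrier_vec (dim_col M)}"

end

theory Submission
  imports Defs "Jordan_Normal_Form.Determinant"
begin

definition inj0 :: "'a::semiring_0 mat \<Rightarrow> bool" where
 "inj0 P \<longleftrightarrow> (\<forall>x\<in>carrier_vec (dim_col P). P *\<^sub>v x = 0\<^sub>v (dim_row P) \<longrightarrow> x = 0\<^sub>v (dim_col P))"

definition catc :: "'a::zero mat \<Rightarrow> 'a mat \<Rightarrow> 'a mat" where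
 "catc P K = mat (dim_row P) (dim_col P + dim_col K)
    (\<lambda>(i,j). if j < dim_col P then P $$ (i,j) else K $$ (i, j - dim_col P))"

definition colmat :: "nat \<Rightarrow> nat \<Rightarrow> (nat \<Rightarrow> 'a vec) \<Rightarrow> 'a mat" where
 "colmat n m f = mat n m (\<lambda>(i,j). f j $ i)"

lemma catc_carrier[simp]: "P \<in> carrier_mat n a \<Longrightarrow> K \<in> carrier_mat n b \<Longrightarrow> catc P K \<in> carrier_mat n (a + b)"
  unfolding catc_def by auto

lemma catc_mult:
  fixes P K :: "'a::comm_ring_1 mat"
  assumes P: "P \<in> carrier_mat n a" and K: "K \<in> carrier_mat n b"
    and x: "x \<in> carrier_vec a" and y: "y \<in> carrier_vec b"
  shows "catc P K *\<^sub>v (x @\<^sub>v y) = P *\<^sub>v x + K *\<^sub>v y"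
proof (rule eq_vecI)
  fix i assume "i < dim_vec (P *\<^sub>v x + K *\<^sub>v y)"
  then have i: "i < n" using P K by simp
  have "(catc P K *\<^sub>v (x @\<^sub>v y)) $ i = (\<Sum>j\<in>{0..<a+b}. catc P K $$ (i,j) * (x @\<^sub>v y) $ j)"
    using P K x y i by (simp add: scalar_prod_def catc_def)
  also have "\<dots> = (\<Sum>j\<in>{0..<a}. catc P K $$ (i,j) * (x @\<^sub>v y) $ j) + (\<Sum>j\<in>{a..<a+b}. catc P K $$ (i,j) * (x @\<^sub>v y) $ j)"
    by (rule sum.atLeastLessThan_concat[symmetric]) auto
  also have "(\<Sum>j\<in>{0..<a}. catc P K $$ (i,j) * (x @\<^sub>v y) $ j) = (\<Sum>j\<in>{0..<a}. P $$ (i,j) * x $ j)"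
    using P K x y i by (intro sum.cong) (auto simp: catc_def)
  also have "(\<Sum>j\<in>{a..<a+b}. catc P K $$ (i,j) * (x @\<^sub>v y) $ j) = (\<Sum>j\<in>{0..<b}. catc P K $$ (i,j+a) * (x @\<^sub>v y) $ (j+a))"
    using sum.shift_bounds_nat_ivl[of "\<lambda>j. catc P K $$ (i,j) * (x @\<^sub>v y) $ j" 0 a b] by (simp add: add.commute)
  also have "\<dots> = (\<Sum>j\<in>{0..<b}. K $$ (i,j) * y $ j)"
    using P K x y i by (intro sum.cong) (auto simp: catc_def)
  finally show "(catc P K *\<^sub>v (x @\<^sub>v y)) $ i = (P *\<^sub>v x + K *\<^sub>v y) $ i"
    using P K x y i by (simp add: scalar_prod_def)
qed (use P K in \<open>simp add: catc_def\<close>)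

lemma vec_self[simp]: "f \<in> carrier_vec n \<Longrightarrow> vec n (($) f) = f"
  by (rule eq_vecI) auto

lemma split_vec: "z \<in> carrier_vec (a + b) \<Longrightarrow> \<exists>x y. x \<in> carrier_vec a \<and> y \<in> carrier_vec b \<and> z = x @\<^sub>v y"
  by (metis vec_first_carrier vec_last_carrier vec_first_last_append)

lemma col_unit: fixes A :: "'a::comm_ring_1 mat" assumes "A \<in> carrier_mat n m" "j < m" shows "A *\<^sub>v unit_vec m j = col A j"
proof (rule eq_vecI)
  fix i assume "i < dim_vec (col A j)"
  then have i: "i < n" using assms by simp
  have "row A i \<bullet> unit_vec m j = row A i $ j" using assms by (intro scalar_prod_right_unit) auto
  then show "(A *\<^sub>v unit_vec m j) $ i = col A j $ i" using assms i by simp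
qed (use assms in auto)

lemma mat_eq_vec: fixes A B :: "'a::comm_ring_1 mat" assumes A: "A \<in> carrier_mat n m" and B: "B \<in> carrier_mat n m"
  and h: "\<And>v. v \<in> carrier_vec m \<Longrightarrow> A *\<^sub>v v = B *\<^sub>v v" shows "A = B"
proof (rule mat_col_eqI)
  fix j assume "j < dim_col B" then have j: "j < m" using B by simp
  show "col A j = col B j" using col_unit[OF A j] col_unit[OF B j] h[of "unit_vec m j"] by simp
qed (use A B in auto)

lemma colmat_carrier[simp]: "colmat n m f \<in> carrier_mat n m" unfolding colmat_def by auto

lemma colmat_col: "j < m \<Longrightarrow> f j \<in> carrier_vec n \<Longrightarrow> col (colmat n m f) j = f j"
  unfolding colmat_def by (rule eq_vecI) auto

lemma colmat_mult: assumes S: "S \<in> carrier_mat k n" and f: "\<And>j. j < m \<Longrightarrow> f j \<in> carrier_vec n"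
  shows "S * colmat n m f = colmat k m (\<lambda>j. S *\<^sub>v f j)"
  by (rule eq_matI) (use S f colmat_col[OF _ f] in \<open>auto simp: colmat_def\<close>)


lemma bez2:
  fixes a b :: "'a::idom" assumes bz: "bezout_domain TYPE('a)"
  shows "\<exists>d x y. d = x*a + y*b \<and> d dvd a \<and> d dvd b"
proof -
  obtain d where H: "{(\<Sum>s\<in>{a,b}. r s * s) | r. True} = {d * z | z. True}"
    using bz unfolding bezout_domain_def by (meson finite.emptyI finite.insertI)
  have "d \<in> {(\<Sum>s\<in>{a,b}. r s * s) | r. True}" unfolding H by (auto intro: exI[of _ 1])
  then obtain r0 where r: "d = (\<Sum>s\<in>{a,b}. r0 s * s)" by blast
  have "(\<Sum>s\<in>{a,b}. (\<lambda>s. if s = a then 1 else 0) s * s) = a"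
    by (cases "a = b") auto
  then have "a \<in> {(\<Sum>s\<in>{a,b}. r s * s) | r. True}" by (intro CollectI exI[of _ "\<lambda>s. if s = a then 1 else 0"]) simp
  then have "a \<in> {d * z | z. True}" unfolding H .
  then obtain za where za: "a = d * za" by blast
  have "(\<Sum>s\<in>{a,b}. (\<lambda>s. if s = b then 1 else 0) s * s) = b"
    by (cases "a = b") auto
  then have "b \<in> {(\<Sum>s\<in>{a,b}. r s * s) | r. True}" by (intro CollectI exI[of _ "\<lambda>s. if s = b then 1 else 0"]) simp
  then have "b \<in> {d * z | z. True}" unfolding H .
  then obtain zb where zb: "b = d * zb" by blast
  have da: "d dvd a" using za by (simp add: dvd_def)
  have db: "d dvd b" using zb by (simp add: dvd_def)
  show ?thesis
  proof (cases "a = b")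
    case True
    then have "d = r0 a * a + 0 * b" using r by simp
    then show ?thesis using da db by blast
  next
    case False
    then have "d = r0 a * a + r0 b * b" using r by simp
    then show ?thesis using da db by blast
  qed
qed

lemma bezn:
  fixes g :: "nat \<Rightarrow> 'a::idom" assumes bz: "bezout_domain TYPE('a)"
  shows "\<exists>d c. d = (\<Sum>j<m. c j * g j) \<and> (\<forall>j<m. d dvd g j)"
proof (induction m)
  case 0
  then show ?case by auto
next
  case (Suc m)
  then obtain d c where dc: "d = (\<Sum>j<m. c j * g j)" "\<forall>j<m. d dvd g j" by auto
  obtain d' x y where d': "d' = x * d + y * g m" "d' dvd d" "d' dvd g m" using bez2[OF bz] by blast
  define c' where "c' = (\<lambda>j. if j < m then x * c j else y)"
  have "(\<Sum>j<Suc m. c' j * g j) = (\<Sum>j<m. c' j * g j) + y * g m" by (simp add: c'_def)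
  also have "(\<Sum>j<m. c' j * g j) = x * d" unfolding dc(1) c'_def
    by (simp add: sum_distrib_left mult.assoc)
  finally have "d' = (\<Sum>j<Suc m. c' j * g j)" using d' by simp
  moreover have "\<forall>j<Suc m. d' dvd g j" using dc d' by (metis dvd_trans less_Suc_eq)
  ultimately show ?case by blast
qed

lemma col_space_iff: "v \<in> col_space G \<longleftrightarrow> (\<exists>x \<in> carrier_vec (dim_col G). v = G *\<^sub>v x)"
  unfolding col_space_def by auto

lemma col_space_zero:
  fixes G :: "'a::comm_ring_1 mat"
  assumes G: "G \<in> carrier_mat n m" and Gz: "\<And>i j. i < n \<Longrightarrow> j < m \<Longrightarrow> G $$ (i,j) = 0"
  shows "col_space G = {0\<^sub>v n}"
proof -
  have Gx: "G *\<^sub>v x = 0\<^sub>v n" if x: "x \<in> carrier_vec m" for x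
  proof (rule eq_vecI)
    fix i assume "i < dim_vec (0\<^sub>v n :: 'a vec)"
    then have i: "i < n" by simp
    have "(G *\<^sub>v x) $ i = (\<Sum>j\<in>{0..<m}. G $$ (i,j) * x $ j)" using G x i by (simp add: scalar_prod_def)
    also have "\<dots> = 0" using Gz[OF i] by (intro sum.neutral) simp
    finally show "(G *\<^sub>v x) $ i = (0\<^sub>v n :: 'a vec) $ i" using i by simp
  qed (use G in simp)
  have dG: "dim_col G = m" using G by simp
  show ?thesis unfolding col_space_def dG
  proof (intro equalityI subsetI)
    fix v assume "v \<in> {G *\<^sub>v x |x. x \<in> carrier_vec m}"
    then obtain x where "v = G *\<^sub>v x" "x \<in> carrier_vec m" by auto
    then show "v \<in> {0\<^sub>v n}" using Gx by simp
  next
    fix v assume "v \<in> {0\<^sub>v n :: 'a vec}"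
    then have "v = G *\<^sub>v 0\<^sub>v m" using Gx[of "0\<^sub>v m"] by simp
    moreover have "0\<^sub>v m \<in> carrier_vec m" by simp
    ultimately show "v \<in> {G *\<^sub>v x |x. x \<in> carrier_vec m}" by blast
  qed
qed

lemma inj0_empty: "inj0 (0\<^sub>m n 0 :: 'a::comm_ring_1 mat)" unfolding inj0_def
proof (intro ballI impI)
  fix x :: "'a vec" assume "x \<in> carrier_vec (dim_col (0\<^sub>m n 0 :: 'a mat))"
  then have "dim_vec x = 0" by simp
  then show "x = 0\<^sub>v (dim_col (0\<^sub>m n 0 :: 'a mat))" by (intro eq_vecI) auto
qed

lemma col_space_mem: "G \<in> carrier_mat n m \<Longrightarrow> x \<in> carrier_vec m \<Longrightarrow> G *\<^sub>v x \<in> col_space G"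
  unfolding col_space_def by auto

lemma col_space_E: assumes "v \<in> col_space G" "G \<in> carrier_mat n m"
  obtains x where "x \<in> carrier_vec m" "v = G *\<^sub>v x"
  using assms unfolding col_space_def by auto

lemma zero_rows_mult: fixes G :: "'a::comm_ring_1 mat"
  assumes "G \<in> carrier_mat n m" "t < n" "\<forall>j<m. G $$ (t,j) = 0" "x \<in> carrier_vec m"
  shows "(G *\<^sub>v x) $ t = 0"
  using assms by (simp add: scalar_prod_def)

lemma basis_aux:
  fixes G :: "'a::idom mat"
  assumes bz: "bezout_domain TYPE('a)"
  shows "G \<in> carrier_mat n m \<Longrightarrow> (\<forall>i<t. \<forall>j<m. G $$ (i,j) = 0) \<Longrightarrow>
     \<exists>k P. P \<in> carrier_mat n k \<and> col_space P = col_space G \<and> inj0 P"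
proof (induction "n - t" arbitrary: t G m)
  case 0
  then have Gz: "\<And>i j. i < n \<Longrightarrow> j < m \<Longrightarrow> G $$ (i,j) = 0" by auto
  have "col_space G = {0\<^sub>v n}" using col_space_zero[OF 0(2) Gz] .
  moreover have "col_space (0\<^sub>m n 0 :: 'a mat) = {0\<^sub>v n}" by (rule col_space_zero) auto
  moreover have "(0\<^sub>m n 0 :: 'a mat) \<in> carrier_mat n 0" by simp
  ultimately show ?case using inj0_empty[where 'a='a, of n] by (intro exI[of _ 0] exI[of _ "0\<^sub>m n 0 :: 'a mat"]) simp
next
  case (Suc d0)
  note G = Suc(3)
  have t: "t < n" using Suc(2) by simp
  have d0: "d0 = n - Suc t" using Suc(2) by arith
  obtain d c where dc: "d = (\<Sum>j<m. c j * G $$ (t,j))" "\<forall>j<m. d dvd G $$ (t,j)"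
    using bezn[OF bz, where m=m and g="\<lambda>j. G $$ (t,j)"] by blast
  define cv where "cv = vec m c"
  define v0 where "v0 = G *\<^sub>v cv"
  have cv: "cv \<in> carrier_vec m" unfolding cv_def by simp
  have v0: "v0 \<in> carrier_vec n" unfolding v0_def using G cv by simp
  have v0t: "v0 $ t = d" unfolding v0_def cv_def dc(1) using G t
    by (simp add: scalar_prod_def lessThan_atLeast0 mult.commute)
  have v0i: "v0 $ i = 0" if "i < t" for i unfolding v0_def cv_def using G t that Suc(4)
    by (simp add: scalar_prod_def)
  show ?case
  proof (cases "d = 0")
    case True
    then have "\<forall>j<m. G $$ (t,j) = 0" using dc(2) by auto
    then have "\<forall>i<Suc t. \<forall>j<m. G $$ (i,j) = 0" using Suc(4) less_Suc_eq by auto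
    then show ?thesis using Suc(1)[of "Suc t" G m, OF d0 G] by blast
  next
    case False
    have "\<forall>j. \<exists>k. j < m \<longrightarrow> G $$ (t,j) = d * k" using dc(2) by (auto simp: dvd_def)
    then obtain q where q: "\<And>j. j < m \<Longrightarrow> G $$ (t,j) = d * q j" using choice by metis
    define qv where "qv = vec m q"
    have qv: "qv \<in> carrier_vec m" unfolding qv_def by simp
    define G' where "G' = mat n m (\<lambda>(i,j). G $$ (i,j) - v0 $ i * q j)"
    have G': "G' \<in> carrier_mat n m" unfolding G'_def by simp
    have G'y: "G' *\<^sub>v y = G *\<^sub>v y - (qv \<bullet> y) \<cdot>\<^sub>v v0" if y: "y \<in> carrier_vec m" for y
    proof (rule eq_vecI)
      fix i assume "i < dim_vec (G *\<^sub>v y - (qv \<bullet> y) \<cdot>\<^sub>v v0)"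
      then have i: "i < n" using G v0 cv by simp
      show "(G' *\<^sub>v y) $ i = (G *\<^sub>v y - (qv \<bullet> y) \<cdot>\<^sub>v v0) $ i"
        using i y G v0 unfolding G'_def qv_def
        by (simp add: scalar_prod_def algebra_simps sum_subtractf sum_distrib_left)
    qed (use G G' v0 in auto)
    have G'z: "\<forall>i<Suc t. \<forall>j<m. G' $$ (i,j) = 0"
    proof (intro allI impI)
      fix i j assume i: "i < Suc t" and j: "j < m"
      show "G' $$ (i,j) = 0"
      proof (cases "i = t")
        case True
        then show ?thesis using t j q[OF j] v0t unfolding G'_def by simp
      next
        case False
        then have "i < t" using i by simp
        then show ?thesis using t j v0i Suc(4) unfolding G'_def by simp
      qed
    qed
    obtain k P' where P': "P' \<in> carrier_mat n k" "col_space P' = col_space G'" "inj0 P'"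
      using Suc(1)[of "Suc t" G' m, OF d0 G' G'z] by blast
    define V0 where "V0 = mat n 1 (\<lambda>(i,j). v0 $ i)"
    have V0: "V0 \<in> carrier_mat n 1" unfolding V0_def by simp
    have V0z: "V0 *\<^sub>v z = (z $ 0) \<cdot>\<^sub>v v0" if "z \<in> carrier_vec 1" for z
      using that v0 unfolding V0_def by (intro eq_vecI) (auto simp: scalar_prod_def)
    define P where "P = catc V0 P'"
    have P: "P \<in> carrier_mat n (1 + k)" unfolding P_def using catc_carrier[OF V0 P'(1)] .
    have Pz: "P *\<^sub>v (z1 @\<^sub>v z2) = (z1 $ 0) \<cdot>\<^sub>v v0 + P' *\<^sub>v z2"
      if "z1 \<in> carrier_vec 1" "z2 \<in> carrier_vec k" for z1 z2
      unfolding P_def using catc_mult[OF V0 P'(1) that] V0z[OF that(1)] by simp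
    have "col_space P = col_space G"
    proof
      show "col_space P \<subseteq> col_space G"
      proof
        fix v assume "v \<in> col_space P"
        then obtain z where z: "z \<in> carrier_vec (1+k)" "v = P *\<^sub>v z" using P by (auto elim: col_space_E)
        obtain z1 z2 where zz: "z1 \<in> carrier_vec 1" "z2 \<in> carrier_vec k" "z = z1 @\<^sub>v z2"
          using split_vec[OF z(1)] by blast
        have "P' *\<^sub>v z2 \<in> col_space P'" using col_space_mem[OF P'(1) zz(2)] .
        then obtain y where y: "y \<in> carrier_vec m" "P' *\<^sub>v z2 = G' *\<^sub>v y"
          using P'(2) G' by (auto elim: col_space_E)
        define w where "w = y + (z1 $ 0 - qv \<bullet> y) \<cdot>\<^sub>v cv"
        have w: "w \<in> carrier_vec m" unfolding w_def using y cv by simp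
        have "v = (z1 $ 0) \<cdot>\<^sub>v v0 + (G *\<^sub>v y - (qv \<bullet> y) \<cdot>\<^sub>v v0)"
          using z zz Pz y G'y by simp
        also have "\<dots> = G *\<^sub>v w"
        proof (rule eq_vecI)
          fix i assume "i < dim_vec (G *\<^sub>v w)"
          then have i: "i < n" using G v0 cv by simp
          have "(G *\<^sub>v w) $ i = (G *\<^sub>v y) $ i + (z1 $ 0 - qv \<bullet> y) * v0 $ i"
            unfolding w_def v0_def using G y cv i
            by (simp add: mult_add_distrib_mat_vec mult_mat_vec)
          then show "((z1 $ 0) \<cdot>\<^sub>v v0 + (G *\<^sub>v y - (qv \<bullet> y) \<cdot>\<^sub>v v0)) $ i = (G *\<^sub>v w) $ i"
            using i v0 G y by (simp add: algebra_simps)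
        qed (use G v0 y in auto)
        finally have "v = G *\<^sub>v w" .
        then show "v \<in> col_space G" unfolding col_space_iff using w G by auto
      qed
    next
      show "col_space G \<subseteq> col_space P"
      proof
        fix v assume "v \<in> col_space G"
        then obtain y where y: "y \<in> carrier_vec m" "v = G *\<^sub>v y" using G by (auto elim: col_space_E)
        have "G' *\<^sub>v y \<in> col_space P'" using col_space_mem[OF G' y(1)] P'(2) by simp
        then obtain z2 where z2: "z2 \<in> carrier_vec k" "G' *\<^sub>v y = P' *\<^sub>v z2"
          using P'(1) by (auto elim: col_space_E)
        define z1 :: "'a vec" where "z1 = vec 1 (\<lambda>_. qv \<bullet> y)"
        have z1: "z1 \<in> carrier_vec 1" unfolding z1_def by simp
        have "v = (z1 $ 0) \<cdot>\<^sub>v v0 + G' *\<^sub>v y"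
        proof (rule eq_vecI)
          fix i assume "i < dim_vec ((z1 $ 0) \<cdot>\<^sub>v v0 + G' *\<^sub>v y)"
          then have i: "i < n" using v0 G G' by simp
          show "v $ i = ((z1 $ 0) \<cdot>\<^sub>v v0 + G' *\<^sub>v y) $ i"
            using i y G v0 G'y[OF y(1)] unfolding z1_def by simp
        qed (use y G v0 G' in auto)
        also have "\<dots> = P *\<^sub>v (z1 @\<^sub>v z2)" using Pz[OF z1 z2(1)] z2 by simp
        finally have "v = P *\<^sub>v (z1 @\<^sub>v z2)" .
        moreover have "z1 @\<^sub>v z2 \<in> carrier_vec (dim_col P)" using P append_carrier_vec[OF z1 z2(1)] by simp
        ultimately show "v \<in> col_space P" unfolding col_space_iff by blast
      qed
    qed
    moreover have "inj0 P" unfolding inj0_def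
    proof (intro ballI impI)
      fix z assume z: "z \<in> carrier_vec (dim_col P)" and Pz0: "P *\<^sub>v z = 0\<^sub>v (dim_row P)"
      obtain z1 z2 where zz: "z1 \<in> carrier_vec 1" "z2 \<in> carrier_vec k" "z = z1 @\<^sub>v z2"
        using split_vec[of z 1 k] z P by auto
      have e: "(z1 $ 0) \<cdot>\<^sub>v v0 + P' *\<^sub>v z2 = 0\<^sub>v n" using Pz0 Pz[OF zz(1,2)] zz P by simp
      have "P' *\<^sub>v z2 \<in> col_space P'" using col_space_mem[OF P'(1) zz(2)] .
      then obtain y where y: "y \<in> carrier_vec m" "P' *\<^sub>v z2 = G' *\<^sub>v y"
        using P'(2) G' by (auto elim: col_space_E)
      have "(G' *\<^sub>v y) $ t = 0" using zero_rows_mult[OF G' t _ y(1)] G'z by auto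
      then have "(P' *\<^sub>v z2) $ t = 0" using y by simp
      then have "z1 $ 0 * d = 0" using arg_cong[OF e, of "\<lambda>v. v $ t"] t v0 v0t P'(1) zz by simp
      then have z10: "z1 $ 0 = 0" using False by simp
      then have z1z: "z1 = 0\<^sub>v 1" using zz(1) by (intro eq_vecI) auto
      have "P' *\<^sub>v z2 = 0\<^sub>v n"
      proof (rule eq_vecI)
        fix i assume "i < dim_vec (0\<^sub>v n :: 'a vec)"
        then have i: "i < n" by simp
        have "((z1 $ 0) \<cdot>\<^sub>v v0 + P' *\<^sub>v z2) $ i = 0" using e i by simp
        then show "(P' *\<^sub>v z2) $ i = (0\<^sub>v n :: 'a vec) $ i" using i z10 v0 P'(1) zz(2) by simp
      qed (use P'(1) in simp)
      then have "z2 = 0\<^sub>v k" using P'(3) P'(1) zz(2) unfolding inj0_def by auto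
      then show "z = 0\<^sub>v (dim_col P)" using zz z1z P by (auto intro!: eq_vecI)
    qed
    ultimately show ?thesis using P by (intro exI[of _ "1+k"] exI[of _ P]) simp
  qed
qed

lemma basis:
  fixes G :: "'a::idom mat"
  assumes bz: "bezout_domain TYPE('a)" and G: "G \<in> carrier_mat n m"
  shows "\<exists>k P. P \<in> carrier_mat n k \<and> col_space P = col_space G \<and> inj0 P"
  using basis_aux[OF bz G, of 0] by auto

lemma inj0_eq: fixes P :: "'a::comm_ring_1 mat"
  assumes "inj0 P" "P \<in> carrier_mat n k" "x \<in> carrier_vec k" "y \<in> carrier_vec k" "P *\<^sub>v x = P *\<^sub>v y"
  shows "x = y"
proof -
  have "P *\<^sub>v (x - y) = P *\<^sub>v x - P *\<^sub>v y" using assms by (simp add: mult_minus_distrib_mat_vec)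
  also have "\<dots> = 0\<^sub>v n" using assms by simp
  finally have "x - y = 0\<^sub>v k" using assms unfolding inj0_def by auto
  show ?thesis
  proof (rule eq_vecI)
    fix i assume "i < dim_vec y"
    then have i: "i < k" using assms by simp
    have "(x - y) $ i = 0" using \<open>x - y = 0\<^sub>v k\<close> i by simp
    then show "x $ i = y $ i" using i assms by simp
  qed (use assms in simp)
qed

lemma dimle: fixes S T :: "'a::idom mat"
  assumes S: "S \<in> carrier_mat n m" and T: "T \<in> carrier_mat m n" and ST: "S * T = 1\<^sub>m n"
  shows "n \<le> m"
proof (rule ccontr)
  assume "\<not> n \<le> m"
  then have mn: "m < n" by simp
  define S' where "S' = mat n n (\<lambda>(i,j). if j < m then S $$ (i,j) else 0)"
  define T' where "T' = mat n n (\<lambda>(i,j). if i < m then T $$ (i,j) else 0)"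
  have S': "S' \<in> carrier_mat n n" and T': "T' \<in> carrier_mat n n" unfolding S'_def T'_def by auto
  have "S' * T' = 1\<^sub>m n"
  proof (rule eq_matI)
    fix i j assume "i < dim_row (1\<^sub>m n :: 'a mat)" "j < dim_col (1\<^sub>m n :: 'a mat)"
    then have i: "i < n" and j: "j < n" by auto
    have "(S' * T') $$ (i,j) = (\<Sum>k\<in>{0..<n}. S' $$ (i,k) * T' $$ (k,j))"
      using S' T' i j by (simp add: scalar_prod_def)
    also have "\<dots> = (\<Sum>k\<in>{0..<m}. S' $$ (i,k) * T' $$ (k,j)) + (\<Sum>k\<in>{m..<n}. S' $$ (i,k) * T' $$ (k,j))"
      using mn by (intro sum.atLeastLessThan_concat[symmetric]) auto
    also have "(\<Sum>k\<in>{m..<n}. S' $$ (i,k) * T' $$ (k,j)) = 0"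
      using i j unfolding S'_def by (intro sum.neutral) auto
    also have "(\<Sum>k\<in>{0..<m}. S' $$ (i,k) * T' $$ (k,j)) = (\<Sum>k\<in>{0..<m}. S $$ (i,k) * T $$ (k,j))"
      using i j mn unfolding S'_def T'_def by (intro sum.cong) auto
    also have "\<dots> = (S * T) $$ (i,j)" using S T i j by (simp add: scalar_prod_def)
    finally show "(S' * T') $$ (i,j) = 1\<^sub>m n $$ (i,j)" using ST by simp
  qed (use S' T' in auto)
  then have "det S' * det T' = 1" using det_mult[OF S' T'] by simp
  then have d: "det S' \<noteq> 0" by auto
  have "S' *\<^sub>v unit_vec n m = 0\<^sub>v n"
  proof (rule eq_vecI)
    fix i assume "i < dim_vec (0\<^sub>v n :: 'a vec)"
    then have i: "i < n" by simp
    have "(S' *\<^sub>v unit_vec n m) $ i = row S' i $ m" using S' i mn by simp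
    also have "\<dots> = 0" using S' i mn unfolding S'_def by simp
    finally show "(S' *\<^sub>v unit_vec n m) $ i = (0\<^sub>v n :: 'a vec) $ i" using i by simp
  qed (use S' in simp)
  moreover have "unit_vec n m \<noteq> (0\<^sub>v n :: 'a vec)"
  proof
    assume "unit_vec n m = (0\<^sub>v n :: 'a vec)"
    then have "unit_vec n m $ m = (0\<^sub>v n :: 'a vec) $ m" by simp
    then show False using mn by simp
  qed
  ultimately have "\<exists>v. v \<in> carrier_vec n \<and> v \<noteq> 0\<^sub>v n \<and> S' *\<^sub>v v = 0\<^sub>v n"
    by (intro exI[of _ "unit_vec n m"]) simp
  then have "det S' = 0" using det_0_iff_vec_prod_zero[OF S'] by simp
  then show False using d by simp
qed

lemma bij_square: fixes S :: "'a::idom mat"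
  assumes S: "S \<in> carrier_mat n m"
    and surj: "\<And>v. v \<in> carrier_vec n \<Longrightarrow> \<exists>z \<in> carrier_vec m. S *\<^sub>v z = v"
    and inj: "inj0 S"
  shows "m = n \<and> (\<exists>T \<in> carrier_mat m n. S * T = 1\<^sub>m n \<and> T * S = 1\<^sub>m m)"
proof -
  have "\<forall>j\<in>{..<n}. \<exists>z. z \<in> carrier_vec m \<and> S *\<^sub>v z = unit_vec n j"
  proof
    fix j assume "j \<in> {..<n}"
    obtain z where "z \<in> carrier_vec m" "S *\<^sub>v z = unit_vec n j" using surj[OF unit_vec_carrier[of n j]] by blast
    then show "\<exists>z. z \<in> carrier_vec m \<and> S *\<^sub>v z = unit_vec n j" by blast
  qed
  from bchoice[OF this] obtain zf where zf0: "\<forall>j\<in>{..<n}. zf j \<in> carrier_vec m \<and> S *\<^sub>v zf j = unit_vec n j"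
    by blast
  have zf: "zf j \<in> carrier_vec m" "S *\<^sub>v zf j = unit_vec n j" if "j < n" for j
    using zf0 that by blast+
  define T where "T = colmat m n zf"
  have T: "T \<in> carrier_mat m n" unfolding T_def by simp
  have ST: "S * T = 1\<^sub>m n"
  proof (rule eq_matI)
    fix i j assume "i < dim_row (1\<^sub>m n :: 'a mat)" "j < dim_col (1\<^sub>m n :: 'a mat)"
    then have i: "i < n" and j: "j < n" by auto
    have "S * T = colmat n n (\<lambda>j. S *\<^sub>v zf j)" unfolding T_def by (rule colmat_mult[OF S zf(1)])
    then have "(S * T) $$ (i,j) = (S *\<^sub>v zf j) $ i" using i j by (simp add: colmat_def)
    also have "\<dots> = unit_vec n j $ i" using zf(2)[OF j] by simp
    finally show "(S * T) $$ (i,j) = 1\<^sub>m n $$ (i,j)" using i j by simp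
  qed (use S T in auto)
  have TS: "T * S = 1\<^sub>m m"
  proof (rule mat_col_eqI)
    fix j assume "j < dim_col (1\<^sub>m m :: 'a mat)"
    then have j: "j < m" by simp
    have c: "col S j \<in> carrier_vec n" by (rule col_carrier_vec[OF j S])
    have TS0: "T * S \<in> carrier_mat m m" using T S by simp
    have c2: "col (T * S) j \<in> carrier_vec m" by (rule col_carrier_vec[OF j TS0])
    have "S *\<^sub>v col (T * S) j = S *\<^sub>v (T *\<^sub>v col S j)" by (simp only: col_mult2[OF T S j])
    also have "\<dots> = (S * T) *\<^sub>v col S j" by (rule assoc_mult_mat_vec[OF S T c, symmetric])
    also have "\<dots> = col S j" unfolding ST by (rule one_mult_mat_vec[OF c])
    also have "\<dots> = S *\<^sub>v unit_vec m j" by (rule col_unit[OF S j, symmetric])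
    finally have eq: "S *\<^sub>v col (T * S) j = S *\<^sub>v unit_vec m j" .
    have "col (T * S) j = unit_vec m j" by (rule inj0_eq[OF inj S c2 unit_vec_carrier eq])
    also have "\<dots> = col (1\<^sub>m m) j" using j by (simp only: col_one)
    finally show "col (T * S) j = col (1\<^sub>m m) j" .
  qed (use T S in auto)
  have "n \<le> m" using dimle[OF S T ST] .
  moreover have "m \<le> n" using dimle[OF T S TS] .
  ultimately have "m = n" by simp
  moreover have "\<exists>T \<in> carrier_mat m n. S * T = 1\<^sub>m n \<and> T * S = 1\<^sub>m m" using T ST TS by blast
  ultimately show ?thesis by blast
qed

lemma mat_vec_zero: fixes A :: "'a::comm_ring_1 mat"
  assumes A: "A \<in> carrier_mat n m" shows "A *\<^sub>v 0\<^sub>v m = 0\<^sub>v n"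
proof (rule eq_vecI)
  fix i assume "i < dim_vec (0\<^sub>v n :: 'a vec)"
  then have i: "i < n" by simp
  show "(A *\<^sub>v 0\<^sub>v m) $ i = (0\<^sub>v n :: 'a vec) $ i" using A i by (simp add: scalar_prod_def)
qed (use A in simp)

lemma right_inv: fixes S :: "'a::idom mat"
  assumes S: "S \<in> carrier_mat n m"
    and surj: "\<And>v. v \<in> carrier_vec n \<Longrightarrow> \<exists>z \<in> carrier_vec m. S *\<^sub>v z = v"
  shows "\<exists>T \<in> carrier_mat m n. S * T = 1\<^sub>m n"
proof -
  have "\<forall>j\<in>{..<n}. \<exists>z. z \<in> carrier_vec m \<and> S *\<^sub>v z = unit_vec n j"
  proof
    fix j assume "j \<in> {..<n}"
    obtain z where "z \<in> carrier_vec m" "S *\<^sub>v z = unit_vec n j" using surj[OF unit_vec_carrier[of n j]] by blast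
    then show "\<exists>z. z \<in> carrier_vec m \<and> S *\<^sub>v z = unit_vec n j" by blast
  qed
  from bchoice[OF this] obtain zf where zf0: "\<forall>j\<in>{..<n}. zf j \<in> carrier_vec m \<and> S *\<^sub>v zf j = unit_vec n j"
    by blast
  have zf: "zf j \<in> carrier_vec m" "S *\<^sub>v zf j = unit_vec n j" if "j < n" for j
    using zf0 that by blast+
  define T where "T = colmat m n zf"
  have T: "T \<in> carrier_mat m n" unfolding T_def by simp
  have ST: "S * T = 1\<^sub>m n"
  proof (rule eq_matI)
    fix i j assume "i < dim_row (1\<^sub>m n :: 'a mat)" "j < dim_col (1\<^sub>m n :: 'a mat)"
    then have i: "i < n" and j: "j < n" by auto
    have "S * T = colmat n n (\<lambda>j. S *\<^sub>v zf j)" unfolding T_def by (rule colmat_mult[OF S zf(1)])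
    then have "(S * T) $$ (i,j) = (S *\<^sub>v zf j) $ i" using i j by (simp add: colmat_def)
    also have "\<dots> = unit_vec n j $ i" using zf(2)[OF j] by simp
    finally show "(S * T) $$ (i,j) = 1\<^sub>m n $$ (i,j)" using i j by simp
  qed (use S T in auto)
  then show ?thesis using T by blast
qed

lemma idx_inter:
  fixes M Y :: "'a::idom mat"
  assumes bz: "bezout_domain TYPE('a)" and M: "M \<in> carrier_mat n n" and Y: "Y \<in> carrier_mat n n"
    and MY: "\<And>v. v \<in> carrier_vec n \<Longrightarrow> M *\<^sub>v v = M *\<^sub>v (M *\<^sub>v (Y *\<^sub>v v))"
    and p: "p \<in> col_space M" and Mp: "M *\<^sub>v p = 0\<^sub>v n"
  shows "p = 0\<^sub>v n"
proof -
  obtain r P where P: "P \<in> carrier_mat n r" "col_space P = col_space M" "inj0 P"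
    using basis[OF bz M] by blast
  have "\<forall>j\<in>{..<r}. \<exists>z. z \<in> carrier_vec r \<and> M *\<^sub>v col P j = P *\<^sub>v z"
  proof
    fix j assume "j \<in> {..<r}"
    then have j: "j < r" by simp
    have "M *\<^sub>v col P j \<in> col_space P" using col_space_mem[OF M col_carrier_vec[OF j P(1)]] P(2) by simp
    then obtain z where "z \<in> carrier_vec r" "M *\<^sub>v col P j = P *\<^sub>v z" using P(1) by (auto elim: col_space_E)
    then show "\<exists>z. z \<in> carrier_vec r \<and> M *\<^sub>v col P j = P *\<^sub>v z" by blast
  qed
  from bchoice[OF this] obtain phi where phi0: "\<forall>j\<in>{..<r}. phi j \<in> carrier_vec r \<and> M *\<^sub>v col P j = P *\<^sub>v phi j"
    by blast
  have phi: "phi j \<in> carrier_vec r" "M *\<^sub>v col P j = P *\<^sub>v phi j" if "j < r" for j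
    using phi0 that by blast+
  define Phi where "Phi = colmat r r phi"
  have Phi: "Phi \<in> carrier_mat r r" unfolding Phi_def by simp
  have MP: "M * P = P * Phi"
  proof (rule mat_col_eqI)
    fix j assume "j < dim_col (P * Phi)"
    then have j: "j < r" using P Phi by simp
    have "col (M * P) j = M *\<^sub>v col P j" by (rule col_mult2[OF M P(1) j])
    also have "\<dots> = P *\<^sub>v phi j" using phi(2)[OF j] .
    also have "\<dots> = P *\<^sub>v col Phi j" unfolding Phi_def using colmat_col[where f=phi and n=r and m=r, OF j phi(1)[OF j]] by simp
    also have "\<dots> = col (P * Phi) j" by (rule col_mult2[OF P(1) Phi j, symmetric])
    finally show "col (M * P) j = col (P * Phi) j" .
  qed (use M P Phi in auto)
  have MPx: "M *\<^sub>v (P *\<^sub>v x) = P *\<^sub>v (Phi *\<^sub>v x)" if x: "x \<in> carrier_vec r" for x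
  proof -
    have "M *\<^sub>v (P *\<^sub>v x) = (M * P) *\<^sub>v x" by (rule assoc_mult_mat_vec[OF M P(1) x, symmetric])
    also have "\<dots> = (P * Phi) *\<^sub>v x" unfolding MP ..
    also have "\<dots> = P *\<^sub>v (Phi *\<^sub>v x)" by (rule assoc_mult_mat_vec[OF P(1) Phi x])
    finally show ?thesis .
  qed
  have surj: "\<exists>z \<in> carrier_vec r. Phi *\<^sub>v z = x" if x: "x \<in> carrier_vec r" for x
  proof -
    have "P *\<^sub>v x \<in> col_space M" using col_space_mem[OF P(1) x] P(2) by simp
    then obtain w where w: "w \<in> carrier_vec n" "P *\<^sub>v x = M *\<^sub>v w" using M by (auto elim: col_space_E)
    have Yw: "Y *\<^sub>v w \<in> carrier_vec n" using Y w by simp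
    have "M *\<^sub>v (Y *\<^sub>v w) \<in> col_space P" using col_space_mem[OF M Yw] P(2) by simp
    then obtain z where z: "z \<in> carrier_vec r" "M *\<^sub>v (Y *\<^sub>v w) = P *\<^sub>v z" using P(1) by (auto elim: col_space_E)
    have "P *\<^sub>v x = M *\<^sub>v (M *\<^sub>v (Y *\<^sub>v w))" using w MY[OF w(1)] by simp
    also have "\<dots> = P *\<^sub>v (Phi *\<^sub>v z)" using z MPx[OF z(1)] by simp
    finally have "x = Phi *\<^sub>v z" using inj0_eq[OF P(3) P(1) x] Phi z by simp
    then show ?thesis using z by blast
  qed
  obtain Psi where Psi: "Psi \<in> carrier_mat r r" "Phi * Psi = 1\<^sub>m r" using right_inv[OF Phi surj] by blast
  have "det Phi * det Psi = 1" using det_mult[OF Phi Psi(1)] Psi(2) by simp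
  then have dP: "det Phi \<noteq> 0" by auto
  have Phi_inj: "x = 0\<^sub>v r" if "x \<in> carrier_vec r" "Phi *\<^sub>v x = 0\<^sub>v r" for x
    using det_0_iff_vec_prod_zero[OF Phi] dP that by blast
  have "p \<in> col_space P" using p P(2) by simp
  then obtain x where x: "x \<in> carrier_vec r" "p = P *\<^sub>v x" using P(1) by (auto elim: col_space_E)
  have "P *\<^sub>v (Phi *\<^sub>v x) = P *\<^sub>v 0\<^sub>v r" using MPx[OF x(1)] Mp x mat_vec_zero[OF P(1)] by simp
  then have "Phi *\<^sub>v x = 0\<^sub>v r" using inj0_eq[OF P(3) P(1)] Phi x by simp
  then have "x = 0\<^sub>v r" using Phi_inj x by simp
  then show ?thesis using x mat_vec_zero[OF P(1)] by simp
qed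

lemma ker_basis:
  fixes M Y :: "'a::idom mat"
  assumes bz: "bezout_domain TYPE('a)" and M: "M \<in> carrier_mat n n" and Y: "Y \<in> carrier_mat n n"
    and MY: "\<And>v. v \<in> carrier_vec n \<Longrightarrow> M *\<^sub>v v = M *\<^sub>v (M *\<^sub>v (Y *\<^sub>v v))"
  shows "\<exists>k K. K \<in> carrier_mat n k \<and> inj0 K \<and>
     (\<forall>v \<in> carrier_vec n. M *\<^sub>v v = 0\<^sub>v n \<longleftrightarrow> v \<in> col_space K)"
proof -
  define G where "G = 1\<^sub>m n - M * Y"
  have MY0: "M * Y \<in> carrier_mat n n" using M Y by simp
  have G: "G \<in> carrier_mat n n" unfolding G_def by (rule minus_carrier_mat[OF MY0])
  have Gv: "G *\<^sub>v v = v - M *\<^sub>v (Y *\<^sub>v v)" if v: "v \<in> carrier_vec n" for v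
  proof -
    have "G *\<^sub>v v = 1\<^sub>m n *\<^sub>v v - (M * Y) *\<^sub>v v" unfolding G_def
      by (rule minus_mult_distrib_mat_vec[OF _ MY0 v]) simp
    then show ?thesis using M Y v by simp
  qed
  obtain k K where K: "K \<in> carrier_mat n k" "col_space K = col_space G" "inj0 K"
    using basis[OF bz G] by blast
  have "M *\<^sub>v v = 0\<^sub>v n \<longleftrightarrow> v \<in> col_space K" if v: "v \<in> carrier_vec n" for v
  proof
    assume Mv: "M *\<^sub>v v = 0\<^sub>v n"
    have Yv: "Y *\<^sub>v v \<in> carrier_vec n" using Y v by simp
    have q: "M *\<^sub>v (Y *\<^sub>v v) \<in> col_space M" by (rule col_space_mem[OF M Yv])
    have "M *\<^sub>v (M *\<^sub>v (Y *\<^sub>v v)) = 0\<^sub>v n" using MY[OF v] Mv by simp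
    then have "M *\<^sub>v (Y *\<^sub>v v) = 0\<^sub>v n" using idx_inter[OF bz M Y MY q] by blast
    then have "G *\<^sub>v v = v" using Gv[OF v] v by simp
    then show "v \<in> col_space K" using col_space_mem[OF G v] K(2) by simp
  next
    assume "v \<in> col_space K"
    then have "v \<in> col_space G" using K(2) by simp
    then obtain w where w: "w \<in> carrier_vec n" "v = G *\<^sub>v w" using G by (auto elim: col_space_E)
    have Yw: "Y *\<^sub>v w \<in> carrier_vec n" using Y w by simp
    have MYw: "M *\<^sub>v (Y *\<^sub>v w) \<in> carrier_vec n" using M Yw by simp
    have "M *\<^sub>v v = M *\<^sub>v (w - M *\<^sub>v (Y *\<^sub>v w))" using w Gv by simp
    also have "\<dots> = M *\<^sub>v w - M *\<^sub>v (M *\<^sub>v (Y *\<^sub>v w))"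
      by (rule mult_minus_distrib_mat_vec[OF M w(1) MYw])
    also have "\<dots> = 0\<^sub>v n" using MY[OF w(1)] minus_cancel_vec[of "M *\<^sub>v (M *\<^sub>v (Y *\<^sub>v w))" n] M Y w(1) by simp
    finally show "M *\<^sub>v v = 0\<^sub>v n" .
  qed
  then show ?thesis using K by blast
qed

lemma add_diff_vec: fixes a v :: "'a::ab_group_add vec"
  assumes "a \<in> carrier_vec n" "v \<in> carrier_vec n" shows "a + (v - a) = v"
  by (rule eq_vecI) (use assms in auto)

lemma append_zero_vec: "0\<^sub>v a @\<^sub>v 0\<^sub>v b = (0\<^sub>v (a + b) :: 'a::zero vec)"
  by (rule eq_vecI) auto

lemma mult_zero_sum: fixes N :: "'a::comm_ring_1 mat"
  assumes N: "N \<in> carrier_mat n n" and a: "a \<in> carrier_vec n" and b: "b \<in> carrier_vec n"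
    and ab: "a + b = 0\<^sub>v n" and Nb: "N *\<^sub>v b = 0\<^sub>v n"
  shows "N *\<^sub>v a = 0\<^sub>v n"
proof -
  have "N *\<^sub>v (a + b) = N *\<^sub>v a + N *\<^sub>v b" by (rule mult_add_distrib_mat_vec[OF N a b])
  then have "N *\<^sub>v a + 0\<^sub>v n = N *\<^sub>v 0\<^sub>v n" using ab Nb by simp
  then show ?thesis using mat_vec_zero[OF N] N a by simp
qed

lemma zero_sum_right: fixes a b :: "'a::comm_ring_1 vec"
  assumes "a + b = 0\<^sub>v n" "a = 0\<^sub>v n" "b \<in> carrier_vec n" shows "b = 0\<^sub>v n"
  using assms by simp

lemma catc_inj0:
  fixes P K :: "'a::comm_ring_1 mat"
  assumes P: "P \<in> carrier_mat n a" and K: "K \<in> carrier_mat n b"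
    and h: "\<And>x y. x \<in> carrier_vec a \<Longrightarrow> y \<in> carrier_vec b \<Longrightarrow> P *\<^sub>v x + K *\<^sub>v y = 0\<^sub>v n \<Longrightarrow> x = 0\<^sub>v a \<and> y = 0\<^sub>v b"
  shows "inj0 (catc P K)"
  unfolding inj0_def
proof (intro ballI impI)
  fix z assume z: "z \<in> carrier_vec (dim_col (catc P K))" and e: "catc P K *\<^sub>v z = 0\<^sub>v (dim_row (catc P K))"
  have cP: "catc P K \<in> carrier_mat n (a + b)" using P K by simp
  obtain x y where xy: "x \<in> carrier_vec a" "y \<in> carrier_vec b" "z = x @\<^sub>v y"
    using split_vec[of z a b] z cP by auto
  have "P *\<^sub>v x + K *\<^sub>v y = 0\<^sub>v n" using e catc_mult[OF P K xy(1,2)] xy(3) cP by simp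
  then have "x = 0\<^sub>v a \<and> y = 0\<^sub>v b" using h xy by blast
  then show "z = 0\<^sub>v (dim_col (catc P K))" using xy cP append_zero_vec[of a b] by simp
qed

lemma catc_surj:
  fixes P K :: "'a::comm_ring_1 mat"
  assumes P: "P \<in> carrier_mat n a" and K: "K \<in> carrier_mat n b"
    and h: "\<And>v. v \<in> carrier_vec n \<Longrightarrow> \<exists>x \<in> carrier_vec a. \<exists>y \<in> carrier_vec b. v = P *\<^sub>v x + K *\<^sub>v y"
    and v: "v \<in> carrier_vec n"
  shows "\<exists>z \<in> carrier_vec (a + b). catc P K *\<^sub>v z = v"
proof -
  obtain x y where xy: "x \<in> carrier_vec a" "y \<in> carrier_vec b" "v = P *\<^sub>v x + K *\<^sub>v y" using h[OF v] by blast
  have "catc P K *\<^sub>v (x @\<^sub>v y) = v" using catc_mult[OF P K xy(1,2)] xy(3) by simp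
  moreover have "x @\<^sub>v y \<in> carrier_vec (a + b)" using xy by simp
  ultimately show ?thesis by blast
qed

theorem corollary2p2:
  fixes A B C :: "'a::idom mat" and n :: nat
  assumes "bezout_domain TYPE('a)"
    and "A \<in> carrier_mat n n" and "B \<in> carrier_mat n n" and "C \<in> carrier_mat n n"
    and "A * B * A = A * C * A"
    and "col_space A = col_space (A * B * A)"
  shows "similar_mat (A * B) (C * A)"
proof -
  note bz = assms(1) and A = assms(2) and B = assms(3) and C = assms(4)
    and ABA = assms(5) and cs = assms(6)
  define M where "M = A * B"
  define N where "N = C * A"
  have M: "M \<in> carrier_mat n n" unfolding M_def using A B by simp
  have N: "N \<in> carrier_mat n n" unfolding N_def using A C by simp
  have Mv: "M *\<^sub>v w = A *\<^sub>v (B *\<^sub>v w)" if w: "w \<in> carrier_vec n" for w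
    unfolding M_def by (rule assoc_mult_mat_vec[OF A B w])
  have Nv: "N *\<^sub>v w = C *\<^sub>v (A *\<^sub>v w)" if w: "w \<in> carrier_vec n" for w
    unfolding N_def by (rule assoc_mult_mat_vec[OF C A w])
  have ABAc: "A * B * A \<in> carrier_mat n n" using A B by simp
  (* the matrix X with A = ABA X *)
  have "\<forall>j\<in>{..<n}. \<exists>x. x \<in> carrier_vec n \<and> col A j = (A * B * A) *\<^sub>v x"
  proof
    fix j assume "j \<in> {..<n}"
    then have j: "j < n" by simp
    have "col A j \<in> col_space A" using col_space_mem[OF A unit_vec_carrier[of n j]] col_unit[OF A j] by simp
    then have "col A j \<in> col_space (A * B * A)" using cs by simp
    then obtain x where "x \<in> carrier_vec n" "col A j = (A * B * A) *\<^sub>v x" using ABAc by (auto elim: col_space_E)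
    then show "\<exists>x. x \<in> carrier_vec n \<and> col A j = (A * B * A) *\<^sub>v x" by blast
  qed
  from bchoice[OF this] obtain xf where xf0: "\<forall>j\<in>{..<n}. xf j \<in> carrier_vec n \<and> col A j = (A * B * A) *\<^sub>v xf j"
    by blast
  have xf: "xf j \<in> carrier_vec n" "col A j = (A * B * A) *\<^sub>v xf j" if "j < n" for j
    using xf0 that by blast+
  define X where "X = colmat n n xf"
  have X: "X \<in> carrier_mat n n" unfolding X_def by simp
  have AX: "A = (A * B * A) * X"
  proof (rule mat_col_eqI)
    fix j assume "j < dim_col ((A * B * A) * X)"
    then have j: "j < n" using ABAc X by simp
    have "col ((A * B * A) * X) j = (A * B * A) *\<^sub>v col X j" by (rule col_mult2[OF ABAc X j])
    also have "col X j = xf j" unfolding X_def by (rule colmat_col[where f=xf and n=n and m=n, OF j xf(1)[OF j]])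
    finally show "col A j = col ((A * B * A) * X) j" using xf(2)[OF j] by simp
  qed (use A ABAc X in auto)
  have ABAv: "(A * B * A) *\<^sub>v w = M *\<^sub>v (A *\<^sub>v w)" if w: "w \<in> carrier_vec n" for w
    unfolding M_def by (rule assoc_mult_mat_vec[OF M[unfolded M_def] A w])
  have AC: "A * C \<in> carrier_mat n n" using A C by simp
  have Aw: "A *\<^sub>v w \<in> carrier_vec n" if "w \<in> carrier_vec n" for w using A that by simp
  have ACAv: "(A * C * A) *\<^sub>v w = A *\<^sub>v (N *\<^sub>v w)" if w: "w \<in> carrier_vec n" for w
  proof -
    have "(A * C * A) *\<^sub>v w = (A * C) *\<^sub>v (A *\<^sub>v w)" by (rule assoc_mult_mat_vec[OF AC A w])
    also have "\<dots> = A *\<^sub>v (C *\<^sub>v (A *\<^sub>v w))" by (rule assoc_mult_mat_vec[OF A C Aw[OF w]])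
    also have "C *\<^sub>v (A *\<^sub>v w) = N *\<^sub>v w" by (rule Nv[OF w, symmetric])
    finally show ?thesis .
  qed
  have V1: "M *\<^sub>v (A *\<^sub>v u) = A *\<^sub>v (N *\<^sub>v u)" if u: "u \<in> carrier_vec n" for u
    using ABAv[OF u] ACAv[OF u] ABA by simp
  have V2: "A *\<^sub>v u = M *\<^sub>v (A *\<^sub>v (X *\<^sub>v u))" if u: "u \<in> carrier_vec n" for u
  proof -
    have Xu: "X *\<^sub>v u \<in> carrier_vec n" using X u by simp
    have "A *\<^sub>v u = ((A * B * A) * X) *\<^sub>v u" using AX by simp
    also have "\<dots> = (A * B * A) *\<^sub>v (X *\<^sub>v u)" by (rule assoc_mult_mat_vec[OF ABAc X u])
    also have "\<dots> = M *\<^sub>v (A *\<^sub>v (X *\<^sub>v u))" by (rule ABAv[OF Xu])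
    finally show ?thesis .
  qed
  have V5: "A *\<^sub>v u = A *\<^sub>v (N *\<^sub>v (N *\<^sub>v (X *\<^sub>v (X *\<^sub>v u))))" if u: "u \<in> carrier_vec n" for u
  proof -
    have Xu: "X *\<^sub>v u \<in> carrier_vec n" using X u by simp
    have XXu: "X *\<^sub>v (X *\<^sub>v u) \<in> carrier_vec n" using X u by simp
    have NXXu: "N *\<^sub>v (X *\<^sub>v (X *\<^sub>v u)) \<in> carrier_vec n" using N X u by simp
    have "A *\<^sub>v u = M *\<^sub>v (A *\<^sub>v (X *\<^sub>v u))" by (rule V2[OF u])
    also have "A *\<^sub>v (X *\<^sub>v u) = M *\<^sub>v (A *\<^sub>v (X *\<^sub>v (X *\<^sub>v u)))" by (rule V2[OF Xu])
    also have "M *\<^sub>v (A *\<^sub>v (X *\<^sub>v (X *\<^sub>v u))) = A *\<^sub>v (N *\<^sub>v (X *\<^sub>v (X *\<^sub>v u)))" by (rule V1[OF XXu])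
    also have "M *\<^sub>v (A *\<^sub>v (N *\<^sub>v (X *\<^sub>v (X *\<^sub>v u)))) = A *\<^sub>v (N *\<^sub>v (N *\<^sub>v (X *\<^sub>v (X *\<^sub>v u))))"
      by (rule V1[OF NXXu])
    finally show ?thesis .
  qed
  define Y where "Y = A * (X * (X * B))"
  have Y: "Y \<in> carrier_mat n n" unfolding Y_def using A X B by simp
  have Yv: "Y *\<^sub>v v = A *\<^sub>v (X *\<^sub>v (X *\<^sub>v (B *\<^sub>v v)))" if v: "v \<in> carrier_vec n" for v
  proof -
    have XB: "X * B \<in> carrier_mat n n" using X B by simp
    have XXB: "X * (X * B) \<in> carrier_mat n n" using X B by simp
    have Bv: "B *\<^sub>v v \<in> carrier_vec n" using B v by simp
    have "Y *\<^sub>v v = A *\<^sub>v ((X * (X * B)) *\<^sub>v v)" unfolding Y_def by (rule assoc_mult_mat_vec[OF A XXB v])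
    also have "(X * (X * B)) *\<^sub>v v = X *\<^sub>v ((X * B) *\<^sub>v v)" by (rule assoc_mult_mat_vec[OF X XB v])
    also have "(X * B) *\<^sub>v v = X *\<^sub>v (B *\<^sub>v v)" by (rule assoc_mult_mat_vec[OF X B v])
    finally show ?thesis .
  qed
  have MY: "M *\<^sub>v v = M *\<^sub>v (M *\<^sub>v (Y *\<^sub>v v))" if v: "v \<in> carrier_vec n" for v
  proof -
    have Bv: "B *\<^sub>v v \<in> carrier_vec n" using B v by simp
    define w where "w = X *\<^sub>v (X *\<^sub>v (B *\<^sub>v v))"
    have w: "w \<in> carrier_vec n" unfolding w_def using X B v by simp
    have Nw: "N *\<^sub>v w \<in> carrier_vec n" using N w by simp
    have "M *\<^sub>v v = A *\<^sub>v (B *\<^sub>v v)" by (rule Mv[OF v])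
    also have "\<dots> = A *\<^sub>v (N *\<^sub>v (N *\<^sub>v w))" unfolding w_def by (rule V5[OF Bv])
    also have "\<dots> = M *\<^sub>v (A *\<^sub>v (N *\<^sub>v w))" by (rule V1[OF Nw, symmetric])
    also have "A *\<^sub>v (N *\<^sub>v w) = M *\<^sub>v (A *\<^sub>v w)" by (rule V1[OF w, symmetric])
    also have "A *\<^sub>v w = Y *\<^sub>v v" unfolding w_def by (rule Yv[OF v, symmetric])
    finally show ?thesis .
  qed
  define Z where "Z = N * (X * X)"
  have Z: "Z \<in> carrier_mat n n" unfolding Z_def using N X by simp
  have Zv: "Z *\<^sub>v v = N *\<^sub>v (X *\<^sub>v (X *\<^sub>v v))" if v: "v \<in> carrier_vec n" for v
  proof -
    have XX: "X * X \<in> carrier_mat n n" using X by simp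
    have "Z *\<^sub>v v = N *\<^sub>v ((X * X) *\<^sub>v v)" unfolding Z_def by (rule assoc_mult_mat_vec[OF N XX v])
    also have "(X * X) *\<^sub>v v = X *\<^sub>v (X *\<^sub>v v)" by (rule assoc_mult_mat_vec[OF X X v])
    finally show ?thesis .
  qed
  have NZ: "N *\<^sub>v v = N *\<^sub>v (N *\<^sub>v (Z *\<^sub>v v))" if v: "v \<in> carrier_vec n" for v
  proof -
    have w: "N *\<^sub>v (N *\<^sub>v (X *\<^sub>v (X *\<^sub>v v))) \<in> carrier_vec n" using N X v by simp
    have "N *\<^sub>v v = C *\<^sub>v (A *\<^sub>v v)" by (rule Nv[OF v])
    also have "\<dots> = C *\<^sub>v (A *\<^sub>v (N *\<^sub>v (N *\<^sub>v (X *\<^sub>v (X *\<^sub>v v)))))" using V5[OF v] by simp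
    also have "\<dots> = N *\<^sub>v (N *\<^sub>v (N *\<^sub>v (X *\<^sub>v (X *\<^sub>v v))))" by (rule Nv[OF w, symmetric])
    also have "N *\<^sub>v (X *\<^sub>v (X *\<^sub>v v)) = Z *\<^sub>v v" by (rule Zv[OF v, symmetric])
    finally show ?thesis .
  qed
  (* bases *)
  obtain s PN where PN: "PN \<in> carrier_mat n s" "col_space PN = col_space N" "inj0 PN"
    using basis[OF bz N] by blast
  obtain kN KN where KN: "KN \<in> carrier_mat n kN" "inj0 KN"
    "\<forall>v \<in> carrier_vec n. N *\<^sub>v v = 0\<^sub>v n \<longleftrightarrow> v \<in> col_space KN"
    using ker_basis[OF bz N Z NZ] by blast
  obtain kM KM where KM: "KM \<in> carrier_mat n kM" "inj0 KM"
    "\<forall>v \<in> carrier_vec n. M *\<^sub>v v = 0\<^sub>v n \<longleftrightarrow> v \<in> col_space KM"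
    using ker_basis[OF bz M Y MY] by blast
  have interN: "p = 0\<^sub>v n" if "p \<in> col_space N" "N *\<^sub>v p = 0\<^sub>v n" for p
    using idx_inter[OF bz N Z NZ that] .
  have interM: "p = 0\<^sub>v n" if "p \<in> col_space M" "M *\<^sub>v p = 0\<^sub>v n" for p
    using idx_inter[OF bz M Y MY that] .
  have PNx: "PN *\<^sub>v x \<in> col_space N" if "x \<in> carrier_vec s" for x
    using col_space_mem[OF PN(1) that] PN(2) by simp
  have inPN: "\<exists>x \<in> carrier_vec s. v = PN *\<^sub>v x" if "v \<in> col_space N" for v
  proof -
    have "v \<in> col_space PN" using that PN(2) by simp
    then obtain x where "x \<in> carrier_vec s" "v = PN *\<^sub>v x" using PN(1) by (auto elim: col_space_E)
    then show ?thesis by blast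
  qed
  have KNy: "N *\<^sub>v (KN *\<^sub>v y) = 0\<^sub>v n" if "y \<in> carrier_vec kN" for y
    using KN(3) col_space_mem[OF KN(1) that] KN(1) that by simp
  have KMy: "M *\<^sub>v (KM *\<^sub>v y) = 0\<^sub>v n" if "y \<in> carrier_vec kM" for y
    using KM(3) col_space_mem[OF KM(1) that] KM(1) that by simp
  have inKN: "\<exists>y \<in> carrier_vec kN. v = KN *\<^sub>v y" if "v \<in> carrier_vec n" "N *\<^sub>v v = 0\<^sub>v n" for v
  proof -
    have "v \<in> col_space KN" using KN(3) that by blast
    then obtain y where "y \<in> carrier_vec kN" "v = KN *\<^sub>v y" using KN(1) by (auto elim: col_space_E)
    then show ?thesis by blast
  qed
  have inKM: "\<exists>y \<in> carrier_vec kM. v = KM *\<^sub>v y" if "v \<in> carrier_vec n" "M *\<^sub>v v = 0\<^sub>v n" for v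
  proof -
    have "v \<in> col_space KM" using KM(3) that by blast
    then obtain y where "y \<in> carrier_vec kM" "v = KM *\<^sub>v y" using KM(1) by (auto elim: col_space_E)
    then show ?thesis by blast
  qed
  (* S2 *)
  define S2 where "S2 = catc PN KN"
  have S2c: "S2 \<in> carrier_mat n (s + kN)" unfolding S2_def using PN(1) KN(1) by simp
  have S2surj: "\<exists>z \<in> carrier_vec (s + kN). S2 *\<^sub>v z = v" if v: "v \<in> carrier_vec n" for v
    unfolding S2_def
  proof (rule catc_surj[OF PN(1) KN(1) _ v])
    fix v :: "'a vec" assume v: "v \<in> carrier_vec n"
    define a where "a = N *\<^sub>v (Z *\<^sub>v v)"
    have a: "a \<in> carrier_vec n" unfolding a_def using N Z v by simp
    have Zv': "Z *\<^sub>v v \<in> carrier_vec n" using Z v by simp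
    obtain x where x: "x \<in> carrier_vec s" "a = PN *\<^sub>v x"
      using inPN[OF col_space_mem[OF N Zv']] unfolding a_def by blast
    have "N *\<^sub>v (v - a) = N *\<^sub>v v - N *\<^sub>v a" by (rule mult_minus_distrib_mat_vec[OF N v a])
    also have "\<dots> = 0\<^sub>v n" unfolding a_def using NZ[OF v] N Z v by simp
    finally obtain y where y: "y \<in> carrier_vec kN" "v - a = KN *\<^sub>v y"
      using inKN[of "v - a"] v a by auto
    have "v = a + (v - a)" using add_diff_vec[OF a v] by simp
    then have "v = PN *\<^sub>v x + KN *\<^sub>v y" using x y by simp
    then show "\<exists>x \<in> carrier_vec s. \<exists>y \<in> carrier_vec kN. v = PN *\<^sub>v x + KN *\<^sub>v y" using x y by blast
  qed
  have S2inj: "inj0 S2" unfolding S2_def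
  proof (rule catc_inj0[OF PN(1) KN(1)])
    fix x y :: "'a vec" assume x: "x \<in> carrier_vec s" and y: "y \<in> carrier_vec kN"
      and e: "PN *\<^sub>v x + KN *\<^sub>v y = 0\<^sub>v n"
    have a: "PN *\<^sub>v x \<in> carrier_vec n" using PN(1) x by simp
    have b: "KN *\<^sub>v y \<in> carrier_vec n" using KN(1) y by simp
    have "N *\<^sub>v (PN *\<^sub>v x) = 0\<^sub>v n" by (rule mult_zero_sum[OF N a b e KNy[OF y]])
    then have a0: "PN *\<^sub>v x = 0\<^sub>v n" using interN PNx[OF x] by blast
    then have x0: "x = 0\<^sub>v s" using PN(3) PN(1) x unfolding inj0_def by auto
    have "KN *\<^sub>v y = 0\<^sub>v n" by (rule zero_sum_right[OF e a0 b])
    then have "y = 0\<^sub>v kN" using KN(2) KN(1) y unfolding inj0_def by auto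
    then show "x = 0\<^sub>v s \<and> y = 0\<^sub>v kN" using x0 by simp
  qed
  obtain T2 where T2: "T2 \<in> carrier_mat (s + kN) n" "S2 * T2 = 1\<^sub>m n" "T2 * S2 = 1\<^sub>m (s + kN)"
    and dN: "s + kN = n"
    using bij_square[OF S2c S2surj S2inj] by blast
  (* S1 *)
  define APN where "APN = A * PN"
  have APN: "APN \<in> carrier_mat n s" unfolding APN_def using A PN(1) by simp
  have APNx: "APN *\<^sub>v x = A *\<^sub>v (PN *\<^sub>v x)" if "x \<in> carrier_vec s" for x
    unfolding APN_def by (rule assoc_mult_mat_vec[OF A PN(1) that])
  define S1 where "S1 = catc APN KM"
  have S1c: "S1 \<in> carrier_mat n (s + kM)" unfolding S1_def using APN KM(1) by simp
  have S1surj: "\<exists>z \<in> carrier_vec (s + kM). S1 *\<^sub>v z = v" if v: "v \<in> carrier_vec n" for v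
    unfolding S1_def
  proof (rule catc_surj[OF APN KM(1) _ v])
    fix v :: "'a vec" assume v: "v \<in> carrier_vec n"
    define a where "a = M *\<^sub>v (Y *\<^sub>v v)"
    have a: "a \<in> carrier_vec n" unfolding a_def using M Y v by simp
    define u where "u = X *\<^sub>v (X *\<^sub>v (B *\<^sub>v (Y *\<^sub>v v)))"
    have u: "u \<in> carrier_vec n" unfolding u_def using X B Y v by simp
    have BYv: "B *\<^sub>v (Y *\<^sub>v v) \<in> carrier_vec n" using B Y v by simp
    have Yv': "Y *\<^sub>v v \<in> carrier_vec n" using Y v by simp
    have Nu: "N *\<^sub>v u \<in> carrier_vec n" using N u by simp
    have "a = A *\<^sub>v (B *\<^sub>v (Y *\<^sub>v v))" unfolding a_def by (rule Mv[OF Yv'])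
    also have "\<dots> = A *\<^sub>v (N *\<^sub>v (N *\<^sub>v u))" unfolding u_def by (rule V5[OF BYv])
    finally have a2: "a = A *\<^sub>v (N *\<^sub>v (N *\<^sub>v u))" .
    obtain x where x: "x \<in> carrier_vec s" "N *\<^sub>v (N *\<^sub>v u) = PN *\<^sub>v x"
      using inPN[OF col_space_mem[OF N Nu]] by blast
    have ax: "a = APN *\<^sub>v x" using a2 x APNx[OF x(1)] by simp
    have "M *\<^sub>v (v - a) = M *\<^sub>v v - M *\<^sub>v a" by (rule mult_minus_distrib_mat_vec[OF M v a])
    also have "\<dots> = 0\<^sub>v n" unfolding a_def using MY[OF v] M Y v by simp
    finally obtain y where y: "y \<in> carrier_vec kM" "v - a = KM *\<^sub>v y"
      using inKM[of "v - a"] v a by auto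
    have "v = a + (v - a)" using add_diff_vec[OF a v] by simp
    then have "v = APN *\<^sub>v x + KM *\<^sub>v y" using ax y by simp
    then show "\<exists>x \<in> carrier_vec s. \<exists>y \<in> carrier_vec kM. v = APN *\<^sub>v x + KM *\<^sub>v y" using x y by blast
  qed
  have S1inj: "inj0 S1" unfolding S1_def
  proof (rule catc_inj0[OF APN KM(1)])
    fix x y :: "'a vec" assume x: "x \<in> carrier_vec s" and y: "y \<in> carrier_vec kM"
      and e: "APN *\<^sub>v x + KM *\<^sub>v y = 0\<^sub>v n"
    have a: "APN *\<^sub>v x \<in> carrier_vec n" using APN x by simp
    have b: "KM *\<^sub>v y \<in> carrier_vec n" using KM(1) y by simp
    have Ma: "M *\<^sub>v (APN *\<^sub>v x) = 0\<^sub>v n" by (rule mult_zero_sum[OF M a b e KMy[OF y]])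
    obtain u where u: "u \<in> carrier_vec n" "PN *\<^sub>v x = N *\<^sub>v u"
      using PNx[OF x] N by (auto elim: col_space_E)
    have Au: "A *\<^sub>v u \<in> carrier_vec n" using A u by simp
    have "APN *\<^sub>v x = A *\<^sub>v (N *\<^sub>v u)" using APNx[OF x] u by simp
    also have "\<dots> = M *\<^sub>v (A *\<^sub>v u)" by (rule V1[OF u(1), symmetric])
    finally have a1: "APN *\<^sub>v x = M *\<^sub>v (A *\<^sub>v u)" .
    have "APN *\<^sub>v x \<in> col_space M" unfolding a1 by (rule col_space_mem[OF M Au])
    then have a0: "APN *\<^sub>v x = 0\<^sub>v n" using interM Ma by blast
    have XU: "X *\<^sub>v u \<in> carrier_vec n" using X u by simp
    have AXu: "A *\<^sub>v (X *\<^sub>v u) \<in> carrier_vec n" using A XU by simp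
    have "A *\<^sub>v u \<in> col_space M" using V2[OF u(1)] col_space_mem[OF M AXu] by simp
    moreover have "M *\<^sub>v (A *\<^sub>v u) = 0\<^sub>v n" using a0 a1 by simp
    ultimately have "A *\<^sub>v u = 0\<^sub>v n" using interM by blast
    then have "N *\<^sub>v u = 0\<^sub>v n" using Nv[OF u(1)] mat_vec_zero[OF C] by simp
    then have "PN *\<^sub>v x = 0\<^sub>v n" using u by simp
    then have x0: "x = 0\<^sub>v s" using PN(3) PN(1) x unfolding inj0_def by auto
    have "KM *\<^sub>v y = 0\<^sub>v n" by (rule zero_sum_right[OF e a0 b])
    then have "y = 0\<^sub>v kM" using KM(2) KM(1) y unfolding inj0_def by auto
    then show "x = 0\<^sub>v s \<and> y = 0\<^sub>v kM" using x0 by simp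
  qed
  obtain T1 where T1: "T1 \<in> carrier_mat (s + kM) n" "S1 * T1 = 1\<^sub>m n" "T1 * S1 = 1\<^sub>m (s + kM)"
    and dM: "s + kM = n"
    using bij_square[OF S1c S1surj S1inj] by blast
  have kk: "kM = kN" using dM dN by simp
  have S1n: "S1 \<in> carrier_mat n n" using S1c dM by simp
  have S2n: "S2 \<in> carrier_mat n n" using S2c dN by simp
  have T1n: "T1 \<in> carrier_mat n n" using T1(1) dM by simp
  have T2n: "T2 \<in> carrier_mat n n" using T2(1) dN by simp
  have T1S1: "T1 * S1 = 1\<^sub>m n" using T1(3) dM by simp
  have T2S2: "T2 * S2 = 1\<^sub>m n" using T2(3) dN by simp
  define W where "W = S1 * T2"
  define Q where "Q = S2 * T1"
  have W: "W \<in> carrier_mat n n" unfolding W_def using S1n T2n by simp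
  have Q: "Q \<in> carrier_mat n n" unfolding Q_def using S2n T1n by simp
  have S2T1: "S2 * T1 \<in> carrier_mat n n" using S2n T1n by simp
  have S1T2: "S1 * T2 \<in> carrier_mat n n" using S1n T2n by simp
  have WQ: "W * Q = 1\<^sub>m n"
  proof -
    have "W * Q = S1 * (T2 * (S2 * T1))" unfolding W_def Q_def by (rule assoc_mult_mat[OF S1n T2n S2T1])
    also have "T2 * (S2 * T1) = (T2 * S2) * T1" by (rule assoc_mult_mat[OF T2n S2n T1n, symmetric])
    also have "\<dots> = T1" unfolding T2S2 by (rule left_mult_one_mat[OF T1n])
    finally show ?thesis using T1(2) by simp
  qed
  have QW: "Q * W = 1\<^sub>m n"
  proof -
    have "Q * W = S2 * (T1 * (S1 * T2))" unfolding W_def Q_def by (rule assoc_mult_mat[OF S2n T1n S1T2])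
    also have "T1 * (S1 * T2) = (T1 * S1) * T2" by (rule assoc_mult_mat[OF T1n S1n T2n, symmetric])
    also have "\<dots> = T2" unfolding T1S1 by (rule left_mult_one_mat[OF T2n])
    finally show ?thesis using T2(2) by simp
  qed
  have AN: "A * N \<in> carrier_mat n n" using A N by simp
  have WS2: "W *\<^sub>v (S2 *\<^sub>v z) = S1 *\<^sub>v z" if z: "z \<in> carrier_vec n" for z
  proof -
    have "W *\<^sub>v (S2 *\<^sub>v z) = (W * S2) *\<^sub>v z" by (rule assoc_mult_mat_vec[OF W S2n z, symmetric])
    also have "W * S2 = S1 * (T2 * S2)" unfolding W_def by (rule assoc_mult_mat[OF S1n T2n S2n])
    also have "\<dots> = S1" unfolding T2S2 by (rule right_mult_one_mat[OF S1n])
    finally show ?thesis .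
  qed
  have WN: "W * N = A * N"
  proof (rule mat_eq_vec[OF _ AN])
    show "W * N \<in> carrier_mat n n" using W N by simp
  next
    fix v :: "'a vec" assume v: "v \<in> carrier_vec n"
    obtain x where x: "x \<in> carrier_vec s" "N *\<^sub>v v = PN *\<^sub>v x"
      using inPN[OF col_space_mem[OF N v]] by blast
    have z0: "x @\<^sub>v 0\<^sub>v kN \<in> carrier_vec n" using x dN by (metis append_carrier_vec zero_carrier_vec)
    have "S2 *\<^sub>v (x @\<^sub>v 0\<^sub>v kN) = PN *\<^sub>v x + KN *\<^sub>v 0\<^sub>v kN"
      unfolding S2_def by (rule catc_mult[OF PN(1) KN(1) x(1)]) simp
    also have "\<dots> = PN *\<^sub>v x" using mat_vec_zero[OF KN(1)] PN(1) x by simp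
    finally have e2: "S2 *\<^sub>v (x @\<^sub>v 0\<^sub>v kN) = N *\<^sub>v v" using x by simp
    have "S1 *\<^sub>v (x @\<^sub>v 0\<^sub>v kN) = APN *\<^sub>v x + KM *\<^sub>v 0\<^sub>v kN"
      unfolding S1_def kk[symmetric] by (rule catc_mult[OF APN KM(1) x(1)]) simp
    also have "\<dots> = A *\<^sub>v (N *\<^sub>v v)" using mat_vec_zero[OF KM(1)] APNx[OF x(1)] x APN kk A PN(1) by simp
    finally have e1: "S1 *\<^sub>v (x @\<^sub>v 0\<^sub>v kN) = A *\<^sub>v (N *\<^sub>v v)" .
    have "(W * N) *\<^sub>v v = W *\<^sub>v (N *\<^sub>v v)" by (rule assoc_mult_mat_vec[OF W N v])
    also have "\<dots> = W *\<^sub>v (S2 *\<^sub>v (x @\<^sub>v 0\<^sub>v kN))" using e2 by simp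
    also have "\<dots> = S1 *\<^sub>v (x @\<^sub>v 0\<^sub>v kN)" by (rule WS2[OF z0])
    also have "\<dots> = (A * N) *\<^sub>v v" using e1 assoc_mult_mat_vec[OF A N v] by simp
    finally show "(W * N) *\<^sub>v v = (A * N) *\<^sub>v v" .
  qed
  have MS1: "M * S1 = (A * N) * S2"
  proof (rule mat_eq_vec)
    show "M * S1 \<in> carrier_mat n n" using M S1n by simp
    show "(A * N) * S2 \<in> carrier_mat n n" using AN S2n by simp
  next
    fix z :: "'a vec" assume z: "z \<in> carrier_vec n"
    obtain x y where xy: "x \<in> carrier_vec s" "y \<in> carrier_vec kN" "z = x @\<^sub>v y"
      using split_vec[of z s kN] z dN by auto
    have y': "y \<in> carrier_vec kM" using xy(2) kk by simp
    have PNx': "PN *\<^sub>v x \<in> carrier_vec n" using PN(1) xy(1) by simp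
    have a: "APN *\<^sub>v x \<in> carrier_vec n" using APN xy(1) by simp
    have b: "KM *\<^sub>v y \<in> carrier_vec n" using KM(1) y' by simp
    have a': "PN *\<^sub>v x \<in> carrier_vec n" using PN(1) xy(1) by simp
    have b': "KN *\<^sub>v y \<in> carrier_vec n" using KN(1) xy(2) by simp
    have NPNx: "N *\<^sub>v (PN *\<^sub>v x) \<in> carrier_vec n" using N a' by simp
    have "S1 *\<^sub>v z = APN *\<^sub>v x + KM *\<^sub>v y" unfolding xy(3) S1_def by (rule catc_mult[OF APN KM(1) xy(1) y'])
    then have "M *\<^sub>v (S1 *\<^sub>v z) = M *\<^sub>v (APN *\<^sub>v x) + M *\<^sub>v (KM *\<^sub>v y)"
      using mult_add_distrib_mat_vec[OF M a b] by simp
    also have "\<dots> = A *\<^sub>v (N *\<^sub>v (PN *\<^sub>v x))" using KMy[OF y'] APNx[OF xy(1)] V1[OF a'] NPNx A by simp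
    finally have l: "M *\<^sub>v (S1 *\<^sub>v z) = A *\<^sub>v (N *\<^sub>v (PN *\<^sub>v x))" .
    have "S2 *\<^sub>v z = PN *\<^sub>v x + KN *\<^sub>v y" unfolding xy(3) S2_def by (rule catc_mult[OF PN(1) KN(1) xy(1,2)])
    then have "N *\<^sub>v (S2 *\<^sub>v z) = N *\<^sub>v (PN *\<^sub>v x) + N *\<^sub>v (KN *\<^sub>v y)"
      using mult_add_distrib_mat_vec[OF N a' b'] by simp
    also have "\<dots> = N *\<^sub>v (PN *\<^sub>v x)" using KNy[OF xy(2)] NPNx by simp
    finally have r: "N *\<^sub>v (S2 *\<^sub>v z) = N *\<^sub>v (PN *\<^sub>v x)" .
    have S2z: "S2 *\<^sub>v z \<in> carrier_vec n" using S2n z by simp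
    have S1z: "S1 *\<^sub>v z \<in> carrier_vec n" using S1n z by simp
    have "(M * S1) *\<^sub>v z = M *\<^sub>v (S1 *\<^sub>v z)" by (rule assoc_mult_mat_vec[OF M S1n z])
    also have "\<dots> = A *\<^sub>v (N *\<^sub>v (S2 *\<^sub>v z))" using l r by simp
    also have "\<dots> = (A * N) *\<^sub>v (S2 *\<^sub>v z)" by (rule assoc_mult_mat_vec[OF A N S2z, symmetric])
    also have "\<dots> = ((A * N) * S2) *\<^sub>v z" by (rule assoc_mult_mat_vec[OF AN S2n z, symmetric])
    finally show "(M * S1) *\<^sub>v z = ((A * N) * S2) *\<^sub>v z" .
  qed
  have MW: "M * W = W * N"
  proof -
    have "M * W = (M * S1) * T2" unfolding W_def by (rule assoc_mult_mat[OF M S1n T2n, symmetric])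
    also have "\<dots> = ((A * N) * S2) * T2" using MS1 by simp
    also have "\<dots> = (A * N) * (S2 * T2)" by (rule assoc_mult_mat[OF AN S2n T2n])
    also have "\<dots> = A * N" unfolding T2(2) by (rule right_mult_one_mat[OF AN])
    finally show ?thesis using WN by simp
  qed
  have "M = M * (W * Q)" unfolding WQ by (rule right_mult_one_mat[OF M, symmetric])
  also have "\<dots> = (M * W) * Q" by (rule assoc_mult_mat[OF M W Q, symmetric])
  also have "\<dots> = W * N * Q" using MW by simp
  finally have MWNQ: "M = W * N * Q" .
  have "similar_mat_wit M N W Q"
    by (rule similar_mat_witI[OF WQ QW MWNQ M N W Q])
  then show ?thesis unfolding M_def N_def similar_mat_def by blast
qed

end
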